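(* Let $S$ be the group defined in the context. The subgroup $\langle v_1v_3\rangle$ is cyclic of order $4$ and is normal in $S$. Moreover, $S/\langle v_1v_3\rangle\cong \mathbb{Z}/2\wr\mathbb{Z}/2\wr\mathbb{Z}/2$.
   Context: Let $S$ be the group generated by $v_1,v_2,v_3,s,t$, where $v_1,v_2,v_3$ commute, each has order $4$, and together generate $(\mathbb{Z}/4)^3$. The elements $s,t$ generate $D_8=\langle t,s\mid t^2=s^4=(ts)^2=1\rangle$, which acts on $(\mathbb{Z}/4)^3$ by conjugation. Writing $x^y=yxy^{-1}$, the action is $$v_1^t=v_3^{-1},\quad v_2^t=v_2^{-1},\quad v_1^s=v_2,\quad v_2^s=v_3,\quad v_3^s=v_2^{-1}v_1v_3.$$ So $S=(\mathbb{Z}/4)^3\rtimes D_8$ has order $2^9$. The group $\mathbb{Z}/2\wr\mathbb{Z}/2\wr\mathbb{Z}/2$ is the iterated wreath product, of order $2^7$; it is a Sylow $2$-subgroup of the symmetric group $S_8$. *)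

theory Defs
  imports "HOL-Algebra.Algebra"
begin

text \<open>(Z/4)^3 is modelled by integer triples (a,b,c) with entries in {0..3},
  standing for v1^a v2^b v3^c (written additively).  D8 is modelled by pairs
  (k,e) with k in {0..3}, e :: bool, standing for s^k t^e (t^True = t).\<close>

definition vmod :: "int \<times> int \<times> int \<Rightarrow> int \<times> int \<times> int" where
  "vmod v = (case v of (a,b,c) \<Rightarrow> (a mod 4, b mod 4, c mod 4))"

definition vadd :: "int \<times> int \<times> int \<Rightarrow> int \<times> int \<times> int \<Rightarrow> int \<times> int \<times> int" where
  "vadd v w = (case v of (a,b,c) \<Rightarrow> case w of (x,y,z) \<Rightarrow> vmod (a+x, b+y, c+z))"

text \<open>Conjugation action of t: v1 -> v3^-1, v2 -> v2^-1, v3 -> v1^-1.\<close>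
definition act_t :: "int \<times> int \<times> int \<Rightarrow> int \<times> int \<times> int" where
  "act_t v = (case v of (a,b,c) \<Rightarrow> vmod (-c, -b, -a))"

text \<open>Conjugation action of s: v1 -> v2, v2 -> v3, v3 -> v2^-1 v1 v3.\<close>
definition act_s :: "int \<times> int \<times> int \<Rightarrow> int \<times> int \<times> int" where
  "act_s v = (case v of (a,b,c) \<Rightarrow> vmod (c, a - c, b + c))"

text \<open>Action of s^k t^e (x^y = y x y^-1, a left action).\<close>
definition d8_act :: "int \<times> bool \<Rightarrow> int \<times> int \<times> int \<Rightarrow> int \<times> int \<times> int" where
  "d8_act g v = (case g of (k,e) \<Rightarrow> (act_s ^^ nat k) (if e then act_t v else v))"

text \<open>Multiplication in D8 = <t,s | t^2 = s^4 = (ts)^2 = 1>, using t s^l = s^-l t.\<close>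
definition d8_mult :: "int \<times> bool \<Rightarrow> int \<times> bool \<Rightarrow> int \<times> bool" where
  "d8_mult g h = (case g of (k,e) \<Rightarrow> case h of (l,f) \<Rightarrow>
      ((k + (if e then - l else l)) mod 4, e \<noteq> f))"

type_synonym S_elem = "(int \<times> int \<times> int) \<times> (int \<times> bool)"

definition S_grp :: "S_elem monoid" where
  "S_grp = \<lparr> carrier = {((a,b,c),(k,e)). a \<in> {0..3} \<and> b \<in> {0..3} \<and> c \<in> {0..3} \<and> k \<in> {0..3}},
             monoid.mult = (\<lambda>(v,g) (w,h). (vadd v (d8_act g w), d8_mult g h)),
             one = ((0,0,0),(0,False)) \<rparr>"

definition gen_v1 :: S_elem where "gen_v1 = ((1,0,0),(0,False))"
definition gen_v2 :: S_elem where "gen_v2 = ((0,1,0),(0,False))"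
definition gen_v3 :: S_elem where "gen_v3 = ((0,0,1),(0,False))"
definition gen_s :: S_elem where "gen_s = ((0,0,0),(1,False))"
definition gen_t :: S_elem where "gen_t = ((0,0,0),(0,True))"

definition wreath_perm ::
  "('a \<Rightarrow> 'a) set \<Rightarrow> 'a set \<Rightarrow> ('b \<Rightarrow> 'b) set \<Rightarrow> 'b set \<Rightarrow> ('a \<times> 'b \<Rightarrow> 'a \<times> 'b) set" where
  "wreath_perm PG PX PH PY = {p. \<exists>f h. h \<in> PH \<and> (\<forall>y\<in>PY. f y \<in> PG) \<and>
      p = (\<lambda>(x,y). if x \<in> PX \<and> y \<in> PY then (f y x, h y) else (x,y))}"

definition C2_perm :: "(bool \<Rightarrow> bool) set" where
  "C2_perm = {id, Not}"

definition W3 :: "((bool \<times> bool) \<times> bool \<Rightarrow> (bool \<times> bool) \<times> bool) monoid" where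
  "W3 = (BijGroup UNIV)\<lparr> carrier :=
      wreath_perm (wreath_perm C2_perm UNIV C2_perm UNIV) UNIV C2_perm UNIV \<rparr>"

end

theory Submission
  imports Defs "HOL-Library.Numeral_Type" "HOL-Library.Cardinality"
begin


lemma mod4_rep: "(x::int) mod 4 = Rep_bit0 (of_int x :: 4)"
  using bit0.Rep_Abs_mod[where 'a=2, of x] by (simp add: bit0.of_int_eq)

lemma of_int_rep: "of_int (Rep_bit0 (z::4)) = z"
  using bit0.Rep_mod[where 'a=2, of z] by (simp add: bit0.of_int_eq Rep_bit0_inverse)

lemma rep_small: "0 \<le> a \<Longrightarrow> a \<le> 3 \<Longrightarrow> Rep_bit0 (of_int a :: 4) = a"
  by (simp add: mod4_rep[symmetric])

lemmas m4s = of_int_rep Rep_bit0_inject rep_small bit0.Rep_0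

definition R3 :: "(int \<times> int \<times> int) set" where "R3 = {0..3} \<times> {0..3} \<times> {0..3}"
definition D8c :: "(int \<times> bool) set" where "D8c = {0..3} \<times> UNIV"

lemma carrier_S: "carrier S_grp = R3 \<times> D8c"
  unfolding S_grp_def R3_def D8c_def by auto

lemma mult_S: "x \<otimes>\<^bsub>S_grp\<^esub> y = (vadd (fst x) (d8_act (snd x) (fst y)), d8_mult (snd x) (snd y))"
  unfolding S_grp_def by (cases x; cases y) auto

lemma one_S: "\<one>\<^bsub>S_grp\<^esub> = ((0,0,0),(0,False))"
  unfolding S_grp_def by simp

lemma vmod_R3: "vmod v \<in> R3"
  unfolding vmod_def R3_def by (cases v) auto

lemma vmod_id: "v \<in> R3 \<Longrightarrow> vmod v = v"
  unfolding vmod_def R3_def by (cases v) auto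

lemma vadd_R3: "vadd v w \<in> R3"
  unfolding vadd_def by (cases v; cases w) (auto simp: vmod_R3)

lemma act_s_R3: "act_s v \<in> R3" unfolding act_s_def by (cases v) (auto simp: vmod_R3)
lemma act_t_R3: "act_t v \<in> R3" unfolding act_t_def by (cases v) (auto simp: vmod_R3)

lemma vadd_assoc: "vadd (vadd u v) w = vadd u (vadd v w)"
  unfolding vadd_def vmod_def 
  by (cases u; cases v; cases w) (simp only: prod.case mod4_rep; simp add: m4s algebra_simps)

lemma act_s_add: "act_s (vadd v w) = vadd (act_s v) (act_s w)"
  unfolding act_s_def vadd_def vmod_def 
  by (cases v; cases w) (simp only: prod.case mod4_rep; simp add: m4s algebra_simps)
lemma act_t_add: "act_t (vadd v w) = vadd (act_t v) (act_t w)"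
  unfolding act_t_def vadd_def vmod_def 
  by (cases v; cases w) (simp only: prod.case mod4_rep; simp add: m4s algebra_simps)

lemma act_s_pow_add: "(act_s ^^ n) (vadd v w) = vadd ((act_s ^^ n) v) ((act_s ^^ n) w)"
  by (induction n) (auto simp: act_s_add)

lemma d8_act_add: "d8_act g (vadd v w) = vadd (d8_act g v) (d8_act g w)"
  unfolding d8_act_def by (cases g) (auto simp: act_s_pow_add act_t_add)

lemma act_s_pow_R3: "v \<in> R3 \<Longrightarrow> (act_s ^^ n) v \<in> R3"
  by (cases n) (auto simp: act_s_R3 simp del: funpow.simps simp add: funpow_Suc_right[symmetric] funpow.simps)

lemma d8_act_R3: "v \<in> R3 \<Longrightarrow> d8_act g v \<in> R3"
  unfolding d8_act_def by (cases g) (auto intro!: act_s_pow_R3 simp: act_t_R3)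

lemma D8_cases: "g \<in> D8c \<Longrightarrow> g \<in> {(0,False),(1,False),(2,False),(3,False),(0,True),(1,True),(2,True),(3,True)}"
proof -
  obtain k e where g: "g = (k,e)" by (cases g)
  assume "g \<in> D8c"
  then have "k = 0 \<or> k = 1 \<or> k = 2 \<or> k = 3" unfolding D8c_def g by auto
  then show ?thesis using g by (cases e) auto
qed

lemma d8_act_0: "d8_act (0,e) v = (if e then act_t v else v)" by (simp add: d8_act_def)
lemma d8_act_1: "d8_act (1,e) v = act_s (if e then act_t v else v)" by (simp add: d8_act_def)
lemma d8_act_2: "d8_act (2,e) v = act_s (act_s (if e then act_t v else v))"
  by (simp add: d8_act_def numeral_2_eq_2)
lemma d8_act_3: "d8_act (3,e) v = act_s (act_s (act_s (if e then act_t v else v)))"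
  by (simp add: d8_act_def numeral_3_eq_3)

lemmas d8_act_simps = d8_act_0 d8_act_1 d8_act_2 d8_act_3

lemma d8_act_mult: "g \<in> D8c \<Longrightarrow> h \<in> D8c \<Longrightarrow> w \<in> R3 \<Longrightarrow>
   d8_act (d8_mult g h) w = d8_act g (d8_act h w)"
  apply (drule D8_cases)+
  apply (cases w)
  apply (simp only: R3_def)
  apply (elim insertE emptyE; simp add: d8_mult_def d8_act_simps; (simp only: act_s_def act_t_def vmod_def prod.case mod4_rep; simp add: m4s algebra_simps)?)
  done

lemma d8_mult_D8: "d8_mult g h \<in> D8c"
  unfolding d8_mult_def D8c_def by (cases g; cases h) auto

lemma d8_mult_assoc: "g \<in> D8c \<Longrightarrow> h \<in> D8c \<Longrightarrow> i \<in> D8c \<Longrightarrow>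
   d8_mult (d8_mult g h) i = d8_mult g (d8_mult h i)"
  unfolding d8_mult_def
  by (cases g; cases h; cases i) (simp split: if_split; simp only: mod4_rep; simp add: m4s algebra_simps)

definition vneg :: "int \<times> int \<times> int \<Rightarrow> int \<times> int \<times> int" where
  "vneg v = (case v of (a,b,c) \<Rightarrow> vmod (-a,-b,-c))"

lemma vneg_add: "vadd (vneg v) v = (0,0,0)"
  unfolding vneg_def vadd_def vmod_def
  by (cases v) (simp only: prod.case mod4_rep; simp add: m4s algebra_simps)

lemma vadd_zero: "v \<in> R3 \<Longrightarrow> vadd (0,0,0) v = v"
  unfolding vadd_def R3_def vmod_def by (cases v) auto

lemma group_S: "group S_grp"
proof (rule groupI)
  fix x y assume "x \<in> carrier S_grp" "y \<in> carrier S_grp"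
  then show "x \<otimes>\<^bsub>S_grp\<^esub> y \<in> carrier S_grp"
    by (simp add: carrier_S mult_S vadd_R3 d8_mult_D8)
next
  show "\<one>\<^bsub>S_grp\<^esub> \<in> carrier S_grp" by (simp add: carrier_S one_S R3_def D8c_def)
next
  fix x y z assume xyz: "x \<in> carrier S_grp" "y \<in> carrier S_grp" "z \<in> carrier S_grp"
  obtain v g where x: "x = (v,g)" by (cases x)
  obtain w h where y: "y = (w,h)" by (cases y)
  obtain u i where z: "z = (u,i)" by (cases z)
  have m: "v \<in> R3" "g \<in> D8c" "w \<in> R3" "h \<in> D8c" "u \<in> R3" "i \<in> D8c"
    using xyz x y z by (auto simp: carrier_S)
  have "d8_act g (vadd w (d8_act h u)) = vadd (d8_act g w) (d8_act (d8_mult g h) u)"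
    using m by (simp add: d8_act_add d8_act_mult)
  then show "(x \<otimes>\<^bsub>S_grp\<^esub> y) \<otimes>\<^bsub>S_grp\<^esub> z = x \<otimes>\<^bsub>S_grp\<^esub> (y \<otimes>\<^bsub>S_grp\<^esub> z)"
    using m by (simp add: x y z mult_S vadd_assoc d8_mult_assoc)
next
  fix x assume "x \<in> carrier S_grp"
  then obtain v k e where x: "x = (v,(k,e))" "v \<in> R3" "k \<in> {0..3}"
    by (auto simp: carrier_S D8c_def)
  then show "\<one>\<^bsub>S_grp\<^esub> \<otimes>\<^bsub>S_grp\<^esub> x = x"
    by (simp add: one_S mult_S d8_act_def vadd_zero d8_mult_def)
next
  fix x assume "x \<in> carrier S_grp"
  then obtain v k e where x: "x = (v,(k,e))" "v \<in> R3" "k \<in> {0..3}"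
    by (auto simp: carrier_S D8c_def)
  define h where "h = (if e then (k,True) else ((-k) mod 4, False))"
  have h: "h \<in> D8c" unfolding h_def D8c_def using x by auto
  have "d8_mult h (k,e) = (0,False)" unfolding h_def d8_mult_def by (auto simp: mod_simps)
  then have "(vneg (d8_act h v), h) \<otimes>\<^bsub>S_grp\<^esub> x = \<one>\<^bsub>S_grp\<^esub>"
    by (simp add: x mult_S one_S vneg_add)
  moreover have "(vneg (d8_act h v), h) \<in> carrier S_grp"
    using h by (simp add: carrier_S vneg_def vmod_R3 split: prod.split)
  ultimately show "\<exists>y\<in>carrier S_grp. y \<otimes>\<^bsub>S_grp\<^esub> x = \<one>\<^bsub>S_grp\<^esub>" by blast
qed



type_synonym pt = "(bool \<times> bool) \<times> bool"

definition wr :: "(bool \<Rightarrow> bool \<Rightarrow> bool) \<Rightarrow> (bool \<Rightarrow> bool) \<Rightarrow> bool \<Rightarrow> pt \<Rightarrow> pt" where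
  "wr \<alpha> \<beta> \<gamma> = (\<lambda>((x1,x2),y). ((x1 \<noteq> \<alpha> y x2, x2 \<noteq> \<beta> y), y \<noteq> \<gamma>))"

lemma wr_comp: "wr \<alpha> \<beta> \<gamma> \<circ> wr \<alpha>' \<beta>' \<gamma>' =
   wr (\<lambda>y x2. \<alpha>' y x2 \<noteq> \<alpha> (y \<noteq> \<gamma>') (x2 \<noteq> \<beta>' y)) (\<lambda>y. \<beta>' y \<noteq> \<beta> (y \<noteq> \<gamma>')) (\<gamma> \<noteq> \<gamma>')"
  by (auto simp: wr_def fun_eq_iff)

lemma wr_comp2: "wr \<alpha> \<beta> \<gamma> \<circ> (wr \<alpha>' \<beta>' \<gamma>' \<circ> h) =
   wr (\<lambda>y x2. \<alpha>' y x2 \<noteq> \<alpha> (y \<noteq> \<gamma>') (x2 \<noteq> \<beta>' y)) (\<lambda>y. \<beta>' y \<noteq> \<beta> (y \<noteq> \<gamma>')) (\<gamma> \<noteq> \<gamma>') \<circ> h"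
  by (simp add: wr_comp o_assoc)

lemma wr_eq: "wr \<alpha> \<beta> \<gamma> = wr \<alpha>' \<beta>' \<gamma>' \<longleftrightarrow> \<alpha> = \<alpha>' \<and> \<beta> = \<beta>' \<and> \<gamma> = \<gamma>'"
proof
  assume h: "wr \<alpha> \<beta> \<gamma> = wr \<alpha>' \<beta>' \<gamma>'"
  have g: "\<gamma> = \<gamma>'" using fun_cong[OF h, of "((False,False),False)"] by (auto simp: wr_def)
  have b: "\<beta> = \<beta>'"
  proof
    fix y show "\<beta> y = \<beta>' y" using fun_cong[OF h, of "((False,False),y)"] by (auto simp: wr_def)
  qed
  have a: "\<alpha> = \<alpha>'"
  proof (intro ext)
    fix y x2 show "\<alpha> y x2 = \<alpha>' y x2" using fun_cong[OF h, of "((False,x2),y)"] by (auto simp: wr_def)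
  qed
  show "\<alpha> = \<alpha>' \<and> \<beta> = \<beta>' \<and> \<gamma> = \<gamma>'" using a b g by simp
qed simp

lemma wr_id: "wr (\<lambda>_ _. False) (\<lambda>_. False) False = id"
  by (auto simp: wr_def fun_eq_iff)

definition wr_inv where
  "wr_inv \<alpha> \<beta> \<gamma> = wr (\<lambda>y x2. \<alpha> (y\<noteq>\<gamma>) (x2 \<noteq> \<beta> (y\<noteq>\<gamma>))) (\<lambda>y. \<beta> (y\<noteq>\<gamma>)) \<gamma>"

lemma bool_cancel [simp]: "((a = (\<not> c)) = (\<not> c)) = a" "((a = c) = c) = a"
  by auto

lemma wr_inv1: "wr_inv \<alpha> \<beta> \<gamma> \<circ> wr \<alpha> \<beta> \<gamma> = id"
  by (simp add: wr_inv_def wr_comp wr_id[symmetric] wr_eq fun_eq_iff)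
lemma wr_inv2: "wr \<alpha> \<beta> \<gamma> \<circ> wr_inv \<alpha> \<beta> \<gamma> = id"
  by (simp add: wr_inv_def wr_comp wr_id[symmetric] wr_eq fun_eq_iff)

lemma wr_bij: "bij (wr \<alpha> \<beta> \<gamma>)"
  by (rule o_bij[OF wr_inv1 wr_inv2])

definition WRset :: "(pt \<Rightarrow> pt) set" where
  "WRset = {wr \<alpha> \<beta> \<gamma> | \<alpha> \<beta> \<gamma>. True}"

lemma C2_ex: "g \<in> C2_perm \<Longrightarrow> \<exists>b. g = (\<lambda>z. z \<noteq> b)"
  unfolding C2_perm_def by (auto intro: exI[of _ False] exI[of _ True] simp: fun_eq_iff)

lemma C2_mem: "(\<lambda>z. z \<noteq> b) \<in> C2_perm"
  unfolding C2_perm_def by (cases b) (auto simp: fun_eq_iff)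

lemma wreath_UNIV: "wreath_perm PG UNIV PH UNIV =
   {p. \<exists>f h. h \<in> PH \<and> (\<forall>y. f y \<in> PG) \<and> p = (\<lambda>(x,y). (f y x, h y))}"
  unfolding wreath_perm_def by simp

lemma C2_eval: "g \<in> C2_perm \<Longrightarrow> g x = (x \<noteq> g False)"
  unfolding C2_perm_def by auto

lemma C2_mem': "(\<lambda>z. z = (\<not> b)) \<in> C2_perm"
  using C2_mem[of b] by simp

lemma inner_ex: "q \<in> wreath_perm C2_perm UNIV C2_perm UNIV \<Longrightarrow>
   \<exists>a b. q = (\<lambda>(x1,x2). (x1 \<noteq> a x2, x2 \<noteq> b))"
proof -
  assume "q \<in> wreath_perm C2_perm UNIV C2_perm UNIV"
  then obtain f h where fh: "h \<in> C2_perm" "\<forall>y. f y \<in> C2_perm" "q = (\<lambda>(x,y). (f y x, h y))"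
    unfolding wreath_UNIV by blast
  define a where "a = (\<lambda>y. f y False)"
  define b where "b = h False"
  have fe: "\<forall>y x. f y x = (x \<noteq> a y)" unfolding a_def using fh(2) C2_eval by blast
  have he: "\<forall>x. h x = (x \<noteq> b)" unfolding b_def using fh(1) C2_eval by blast
  have "q = (\<lambda>(x1,x2). (x1 \<noteq> a x2, x2 \<noteq> b))" unfolding fh(3) by (simp add: fe he)
  then show ?thesis by blast
qed

lemma inner_mem: "(\<lambda>(x1,x2). (x1 \<noteq> a x2, x2 \<noteq> b)) \<in> wreath_perm C2_perm UNIV C2_perm UNIV"
  unfolding wreath_UNIV
  by (rule CollectI, rule exI[of _ "\<lambda>y z. z \<noteq> a y"], rule exI[of _ "\<lambda>z. z \<noteq> b"]) (auto simp: C2_mem')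

lemma carrier_W3: "carrier W3 = WRset"
proof
  show "carrier W3 \<subseteq> WRset"
  proof
    fix p assume "p \<in> carrier W3"
    then obtain f h where fh: "h \<in> C2_perm" "\<forall>y. f y \<in> wreath_perm C2_perm UNIV C2_perm UNIV"
       "p = (\<lambda>(x,y). (f y x, h y))"
      unfolding W3_def by (auto simp: wreath_UNIV[of "wreath_perm C2_perm UNIV C2_perm UNIV"])
    obtain b where b: "h = (\<lambda>z. z \<noteq> b)" using C2_ex[OF fh(1)] by blast
    have "\<forall>y. \<exists>a. \<exists>c. f y = (\<lambda>(x1,x2). (x1 \<noteq> a x2, x2 \<noteq> c))"
      using fh(2) inner_ex by blast
    then obtain A where "\<forall>y. \<exists>c. f y = (\<lambda>(x1,x2). (x1 \<noteq> A y x2, x2 \<noteq> c))"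
      by (rule choice[THEN exE])
    then obtain B where AB: "\<forall>y. f y = (\<lambda>(x1,x2). (x1 \<noteq> A y x2, x2 \<noteq> B y))"
      by (rule choice[THEN exE])
    have "p = wr A B b"
      unfolding wr_def fh(3) b by (auto simp: fun_eq_iff AB)
    then show "p \<in> WRset" unfolding WRset_def by blast
  qed
next
  show "WRset \<subseteq> carrier W3"
  proof
    fix p assume "p \<in> WRset"
    then obtain \<alpha> \<beta> \<gamma> where p: "p = wr \<alpha> \<beta> \<gamma>" unfolding WRset_def by blast
    have "p = (\<lambda>(x,y). ((\<lambda>y. \<lambda>(x1,x2). (x1 \<noteq> \<alpha> y x2, x2 \<noteq> \<beta> y)) y x, (\<lambda>z. z \<noteq> \<gamma>) y))"
      unfolding p wr_def by (auto simp: fun_eq_iff)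
    moreover have "(\<lambda>z. z \<noteq> \<gamma>) \<in> C2_perm" by (rule C2_mem)
    moreover have "\<forall>y. (\<lambda>y. \<lambda>(x1,x2). (x1 \<noteq> \<alpha> y x2, x2 \<noteq> \<beta> y)) y \<in> wreath_perm C2_perm UNIV C2_perm UNIV"
      using inner_mem by simp
    ultimately have "p \<in> wreath_perm (wreath_perm C2_perm UNIV C2_perm UNIV) UNIV C2_perm UNIV"
      unfolding wreath_UNIV[of "wreath_perm C2_perm UNIV C2_perm UNIV"]
      by (intro CollectI exI[of _ "\<lambda>y. \<lambda>(x1,x2). (x1 \<noteq> \<alpha> y x2, x2 \<noteq> \<beta> y)"] exI[of _ "\<lambda>z. z \<noteq> \<gamma>"]) blast
    then show "p \<in> carrier W3" by (simp add: W3_def)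
  qed
qed

lemma WR_Bij: "p \<in> WRset \<Longrightarrow> p \<in> Bij UNIV"
  unfolding WRset_def Bij_def using wr_bij by auto

lemma mult_W3: "p \<in> WRset \<Longrightarrow> q \<in> WRset \<Longrightarrow> p \<otimes>\<^bsub>W3\<^esub> q = p \<circ> q"
proof -
  assume "p \<in> WRset" "q \<in> WRset"
  then have "p \<in> Bij UNIV" "q \<in> Bij UNIV" by (auto intro: WR_Bij)
  then have "p \<otimes>\<^bsub>W3\<^esub> q = compose UNIV p q" unfolding W3_def BijGroup_def by simp
  also have "\<dots> = p \<circ> q" unfolding compose_def restrict_UNIV by (simp add: o_def)
  finally show ?thesis .
qed

lemma one_W3: "\<one>\<^bsub>W3\<^esub> = id"
  unfolding W3_def BijGroup_def by (simp add: restrict_UNIV id_def)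

lemma WR_comp: "p \<in> WRset \<Longrightarrow> q \<in> WRset \<Longrightarrow> p \<circ> q \<in> WRset"
proof -
  assume "p \<in> WRset" "q \<in> WRset"
  then obtain a b c a' b' c' where "p = wr a b c" "q = wr a' b' c'" unfolding WRset_def by blast
  then have "p \<circ> q = wr (\<lambda>y x2. a' y x2 \<noteq> a (y \<noteq> c') (x2 \<noteq> b' y)) (\<lambda>y. b' y \<noteq> b (y \<noteq> c')) (c \<noteq> c')"
    by (simp only: wr_comp)
  then show ?thesis unfolding WRset_def by blast
qed

lemma WR_id: "id \<in> WRset"
  unfolding WRset_def wr_id[symmetric] by blast

lemma group_W3: "group W3"
proof (rule groupI)
  fix x y assume "x \<in> carrier W3" "y \<in> carrier W3"
  then show "x \<otimes>\<^bsub>W3\<^esub> y \<in> carrier W3" by (simp add: carrier_W3 mult_W3 WR_comp)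
next
  show "\<one>\<^bsub>W3\<^esub> \<in> carrier W3" by (simp add: carrier_W3 one_W3 WR_id)
next
  fix x y z assume "x \<in> carrier W3" "y \<in> carrier W3" "z \<in> carrier W3"
  then show "x \<otimes>\<^bsub>W3\<^esub> y \<otimes>\<^bsub>W3\<^esub> z = x \<otimes>\<^bsub>W3\<^esub> (y \<otimes>\<^bsub>W3\<^esub> z)"
    by (simp add: carrier_W3 mult_W3 WR_comp o_assoc)
next
  fix x assume "x \<in> carrier W3"
  then show "\<one>\<^bsub>W3\<^esub> \<otimes>\<^bsub>W3\<^esub> x = x" by (simp add: carrier_W3 mult_W3 one_W3 WR_id)
next
  fix x assume "x \<in> carrier W3"
  then obtain \<alpha> \<beta> \<gamma> where x: "x = wr \<alpha> \<beta> \<gamma>" by (auto simp: carrier_W3 WRset_def)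
  have "wr_inv \<alpha> \<beta> \<gamma> \<in> carrier W3" unfolding carrier_W3 WRset_def wr_inv_def by blast
  moreover have "wr_inv \<alpha> \<beta> \<gamma> \<otimes>\<^bsub>W3\<^esub> x = \<one>\<^bsub>W3\<^esub>"
    using calculation \<open>x \<in> carrier W3\<close> by (simp add: carrier_W3 mult_W3 one_W3 x wr_inv1)
  ultimately show "\<exists>y\<in>carrier W3. y \<otimes>\<^bsub>W3\<^esub> x = \<one>\<^bsub>W3\<^esub>" by blast
qed

lemma card_W3: "card (carrier W3) = 128"
proof -
  have "carrier W3 = (\<lambda>(a,b,c). wr a b c) ` UNIV"
  proof (rule equalityI; rule subsetI)
    fix p assume "p \<in> carrier W3"
    then obtain a b c where "p = wr a b c" unfolding carrier_W3 WRset_def by blast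
    then show "p \<in> (\<lambda>(a,b,c). wr a b c) ` UNIV" by (intro image_eqI[where x="(a,b,c)"]) auto
  next
    fix p assume "p \<in> (\<lambda>(a,b,c). wr a b c) ` UNIV"
    then show "p \<in> carrier W3" by (auto simp: carrier_W3 WRset_def)
  qed
  moreover have "inj (\<lambda>(a,b,c). wr a b c)"
    by (auto simp: inj_def wr_eq)
  ultimately have "card (carrier W3) = CARD((bool \<Rightarrow> bool \<Rightarrow> bool) \<times> (bool \<Rightarrow> bool) \<times> bool)"
    by (simp add: card_image)
  also have "\<dots> = 128" by (simp add: card_fun)
  finally show ?thesis .
qed



definition V1 where "V1 = wr (\<lambda>y x2. \<not> y \<or> x2) (\<lambda>y. y) False"
definition V2 where "V2 = wr (\<lambda>y x2. y \<or> \<not> x2) (\<lambda>y. \<not> y) False"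
definition V3 where "V3 = wr (\<lambda>y x2. \<not> (y \<and> x2)) (\<lambda>y. y) False"
definition Sg where "Sg = wr (\<lambda>_ _. False) (\<lambda>y. y) True"
definition Tg where "Tg = wr (\<lambda>_ _. False) (\<lambda>y. \<not> y) False"

definition Vpow :: "(pt \<Rightarrow> pt) \<Rightarrow> int \<Rightarrow> pt \<Rightarrow> pt" where
  "Vpow f n = (if n mod 4 = 0 then id else if n mod 4 = 1 then f else if n mod 4 = 2 then f \<circ> f else f \<circ> f \<circ> f)"

definition Pv :: "int \<times> int \<times> int \<Rightarrow> pt \<Rightarrow> pt" where
  "Pv v = (case v of (a,b,c) \<Rightarrow> Vpow V1 a \<circ> Vpow V2 b \<circ> Vpow V3 c)"

definition Qg :: "int \<times> bool \<Rightarrow> pt \<Rightarrow> pt" where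
  "Qg g = (case g of (k,e) \<Rightarrow> Vpow Sg k \<circ> (if e then Tg else id))"

definition phi :: "S_elem \<Rightarrow> pt \<Rightarrow> pt" where
  "phi x = Pv (fst x) \<circ> Qg (snd x)"

lemmas gens_def = V1_def V2_def V3_def Sg_def Tg_def

lemma wr_ids: "id = wr (\<lambda>_ _. False) (\<lambda>_. False) False" by (simp add: wr_id)

lemma wr_eq': "wr \<alpha> \<beta> \<gamma> = wr \<alpha>' \<beta>' \<gamma>' \<longleftrightarrow> (\<forall>y x2. \<alpha> y x2 = \<alpha>' y x2) \<and> (\<forall>y. \<beta> y = \<beta>' y) \<and> \<gamma> = \<gamma>'"
  unfolding wr_eq by (simp add: fun_eq_iff)

lemmas wrcalc = wr_comp wr_comp2 wr_eq fun_eq_iff o_assoc[symmetric] id_o o_id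

lemma V1_4: "V1 \<circ> V1 \<circ> V1 \<circ> V1 = id" by (simp add: V1_def wr_comp wr_ids wr_eq' all_bool_eq)
lemma V2_4: "V2 \<circ> V2 \<circ> V2 \<circ> V2 = id" by (simp add: V2_def wr_comp wr_ids wr_eq' all_bool_eq)
lemma V3_4: "V3 \<circ> V3 \<circ> V3 \<circ> V3 = id" by (simp add: V3_def wr_comp wr_ids wr_eq' all_bool_eq)
lemma Sg_4: "Sg \<circ> Sg \<circ> Sg \<circ> Sg = id" by (simp add: Sg_def wr_comp wr_ids wr_eq' all_bool_eq)

lemma Vpow_mod: "Vpow f (n mod 4) = Vpow f n" by (simp add: Vpow_def)

lemma Vpow_add:
  assumes f4: "f \<circ> f \<circ> f \<circ> f = id"
  shows "Vpow f (a + b) = Vpow f a \<circ> Vpow f b"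
proof -
  have f4': "f \<circ> f \<circ> f \<circ> f \<circ> g = g" for g using f4 by simp
  have ab: "(a + b) mod 4 = (a mod 4 + b mod 4) mod 4" by (simp add: mod_simps)
  have "a mod 4 \<in> {0,1,2,3}" "b mod 4 \<in> {0,1,2,3}" by auto
  then show ?thesis unfolding Vpow_def ab
    by (elim insertE emptyE) (simp_all add: o_assoc f4 f4')
qed

lemmas wrc = gens_def wr_comp wr_ids wr_eq' all_bool_eq o_assoc

lemma V12: "Vpow V1 a \<circ> Vpow V2 b = Vpow V2 b \<circ> Vpow V1 a"
  unfolding Vpow_def by (simp add: wrc)
lemma V13: "Vpow V1 a \<circ> Vpow V3 b = Vpow V3 b \<circ> Vpow V1 a"
  unfolding Vpow_def by (simp add: wrc)
lemma V23: "Vpow V2 a \<circ> Vpow V3 b = Vpow V3 b \<circ> Vpow V2 a"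
  unfolding Vpow_def by (simp add: wrc)

lemma V12': "Vpow V1 a \<circ> (Vpow V2 b \<circ> h) = Vpow V2 b \<circ> (Vpow V1 a \<circ> h)"
  by (simp add: o_assoc V12)
lemma V13': "Vpow V1 a \<circ> (Vpow V3 b \<circ> h) = Vpow V3 b \<circ> (Vpow V1 a \<circ> h)"
  by (simp add: o_assoc V13)
lemma V23': "Vpow V2 a \<circ> (Vpow V3 b \<circ> h) = Vpow V3 b \<circ> (Vpow V2 a \<circ> h)"
  by (simp add: o_assoc V23)

lemma Pv_vmod: "Pv (vmod v) = Pv v"
  unfolding Pv_def vmod_def by (cases v) (simp add: Vpow_mod)

lemma Pv_add: "Pv (vadd v w) = Pv v \<circ> Pv w"
proof -
  obtain a b c where v: "v = (a,b,c)" by (cases v)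
  obtain x y z where w: "w = (x,y,z)" by (cases w)
  have "Pv (vadd v w) = Pv (a+x, b+y, c+z)" unfolding v w vadd_def by (simp add: Pv_vmod)
  also have "\<dots> = Vpow V1 a \<circ> Vpow V1 x \<circ> (Vpow V2 b \<circ> Vpow V2 y) \<circ> (Vpow V3 c \<circ> Vpow V3 z)"
    unfolding Pv_def by (simp add: Vpow_add V1_4 V2_4 V3_4)
  also have "\<dots> = Pv v \<circ> Pv w"
    unfolding Pv_def v w by (simp add: comp_assoc V12 V13 V23 V12' V13' V23')
  finally show ?thesis .
qed

lemma Qg_mult: "g \<in> D8c \<Longrightarrow> h \<in> D8c \<Longrightarrow> Qg (d8_mult g h) = Qg g \<circ> Qg h"
  apply (drule D8_cases)+
  apply (elim insertE emptyE; simp add: Qg_def d8_mult_def Vpow_def wrc)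
  done

lemma int4_enum: "(a::int) \<in> {0..3} \<Longrightarrow> a \<in> {0,1,2,3}"
  by auto

lemma Sg_Pv: "w \<in> R3 \<Longrightarrow> Sg \<circ> Pv w = Pv (act_s w) \<circ> Sg"
  apply (cases w)
  apply (simp only: R3_def mem_Times_iff fst_conv snd_conv)
  apply (elim conjE)
  apply (drule int4_enum)+
  apply (elim insertE emptyE; simp add: Pv_def act_s_def vmod_def Vpow_def wrc)
  done

lemma Tg_Pv: "w \<in> R3 \<Longrightarrow> Tg \<circ> Pv w = Pv (act_t w) \<circ> Tg"
  apply (cases w)
  apply (simp only: R3_def mem_Times_iff fst_conv snd_conv)
  apply (elim conjE)
  apply (drule int4_enum)+
  apply (elim insertE emptyE; simp add: Pv_def act_t_def vmod_def Vpow_def wrc)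
  done

lemma Sg_Pv': "w \<in> R3 \<Longrightarrow> Sg \<circ> (Pv w \<circ> h) = Pv (act_s w) \<circ> (Sg \<circ> h)"
  by (simp add: o_assoc Sg_Pv)
lemma Tg_Pv': "w \<in> R3 \<Longrightarrow> Tg \<circ> (Pv w \<circ> h) = Pv (act_t w) \<circ> (Tg \<circ> h)"
  by (simp add: o_assoc Tg_Pv)

lemma Qg_Pv: "g \<in> D8c \<Longrightarrow> w \<in> R3 \<Longrightarrow> Qg g \<circ> Pv w = Pv (d8_act g w) \<circ> Qg g"
  apply (drule D8_cases)
  apply (elim insertE emptyE; simp add: Qg_def Vpow_def d8_act_simps comp_assoc Sg_Pv Sg_Pv' Tg_Pv Tg_Pv' act_s_R3 act_t_R3)
  done

lemma Qg_Pv': "g \<in> D8c \<Longrightarrow> w \<in> R3 \<Longrightarrow> Qg g \<circ> (Pv w \<circ> h) = Pv (d8_act g w) \<circ> (Qg g \<circ> h)"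
  by (simp add: o_assoc Qg_Pv)

lemma phi_mult: "x \<in> carrier S_grp \<Longrightarrow> y \<in> carrier S_grp \<Longrightarrow>
   phi (x \<otimes>\<^bsub>S_grp\<^esub> y) = phi x \<circ> phi y"
proof -
  assume "x \<in> carrier S_grp" "y \<in> carrier S_grp"
  then obtain v g w h where x: "x = (v,g)" and y: "y = (w,h)" and m: "v \<in> R3" "g \<in> D8c" "w \<in> R3" "h \<in> D8c"
    by (auto simp: carrier_S)
  show ?thesis
    unfolding x y phi_def mult_S using m
    by (simp add: Pv_add Qg_mult comp_assoc Qg_Pv')
qed

lemma WR_gens: "V1 \<in> WRset" "V2 \<in> WRset" "V3 \<in> WRset" "Sg \<in> WRset" "Tg \<in> WRset"
  unfolding WRset_def gens_def by blast+

lemma Vpow_WR: "f \<in> WRset \<Longrightarrow> Vpow f n \<in> WRset"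
  unfolding Vpow_def by (simp add: WR_comp WR_id)

lemma phi_WR: "phi x \<in> WRset"
  unfolding phi_def Pv_def Qg_def
  by (simp add: WR_comp WR_id Vpow_WR WR_gens split: prod.split)

lemma phi_hom: "group_hom S_grp W3 phi"
  unfolding group_hom_def group_hom_axioms_def
  by (auto simp: group_S group_W3 hom_def carrier_W3 phi_WR mult_W3 phi_mult)

definition CA :: "bool \<Rightarrow> bool \<Rightarrow> bool \<Rightarrow> pt \<Rightarrow> pt" where
  "CA b y0 x0 = wr (\<lambda>y x2. b \<and> y = y0 \<and> x2 = x0) (\<lambda>_. False) False"
definition CB :: "bool \<Rightarrow> bool \<Rightarrow> pt \<Rightarrow> pt" where
  "CB b y0 = wr (\<lambda>_ _. False) (\<lambda>y. b \<and> y = y0) False"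
definition CG :: "bool \<Rightarrow> pt \<Rightarrow> pt" where
  "CG b = wr (\<lambda>_ _. False) (\<lambda>_. False) b"

lemma wr_decomp: "wr \<alpha> \<beta> \<gamma> = CG \<gamma> \<circ> CB (\<beta> False) False \<circ> CB (\<beta> True) True \<circ>
   CA (\<alpha> False False) False False \<circ> CA (\<alpha> False True) False True \<circ>
   CA (\<alpha> True False) True False \<circ> CA (\<alpha> True True) True True"
  unfolding CA_def CB_def CG_def by (simp add: wrc)

lemma phi_CA1: "phi ((0,3,2),(0,True)) = CA True False False"
  by (simp add: phi_def Pv_def Qg_def Vpow_def CA_def wrc)
lemma phi_CA2: "phi ((0,1,2),(0,True)) = CA True False True"
  by (simp add: phi_def Pv_def Qg_def Vpow_def CA_def wrc)
lemma phi_CA3: "phi ((0,2,3),(2,True)) = CA True True False"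
  by (simp add: phi_def Pv_def Qg_def Vpow_def CA_def wrc)
lemma phi_CA4: "phi ((0,2,1),(2,True)) = CA True True True"
  by (simp add: phi_def Pv_def Qg_def Vpow_def CA_def wrc)
lemma phi_CB1: "phi ((0,0,0),(0,True)) = CB True False"
  by (simp add: phi_def Pv_def Qg_def Vpow_def CB_def wrc)
lemma phi_CB2: "phi ((0,0,0),(2,True)) = CB True True"
  by (simp add: phi_def Pv_def Qg_def Vpow_def CB_def wrc)
lemma phi_CG: "phi ((0,0,0),(3,True)) = CG True"
  by (simp add: phi_def Pv_def Qg_def Vpow_def CG_def wrc)

lemma CA_False: "CA False y x = id" unfolding CA_def by (simp add: wr_id)
lemma CB_False: "CB False y = id" unfolding CB_def by (simp add: wr_id)
lemma CG_False: "CG False = id" unfolding CG_def by (simp add: wr_id)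

lemma phi_surj: "phi ` carrier S_grp = carrier W3"
proof
  show "phi ` carrier S_grp \<subseteq> carrier W3" by (auto simp: carrier_W3 phi_WR)
next
  let ?H = "phi ` carrier S_grp"
  have sub: "subgroup ?H W3" by (rule group_hom.img_is_subgroup[OF phi_hom])
  have idH: "id \<in> ?H" using subgroup.one_closed[OF sub] by (simp add: one_W3)
  have cl: "p \<circ> q \<in> ?H" if "p \<in> ?H" "q \<in> ?H" for p q
  proof -
    have "p \<in> WRset" "q \<in> WRset" using that by (auto simp: phi_WR)
    then show ?thesis using subgroup.m_closed[OF sub that] by (simp add: mult_W3)
  qed
  have inS: "((a,b,c),(k,e)) \<in> carrier S_grp" if "a \<in> {0..3}" "b \<in> {0..3}" "c \<in> {0..3}" "k \<in> {0..3}" for a b c k e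
    using that by (simp add: carrier_S R3_def D8c_def)
  have img: "phi x \<in> ?H" if "x \<in> carrier S_grp" for x using that by blast
  have CAH: "CA b y x \<in> ?H" for b y x
  proof (cases b)
    case True
    then show ?thesis
      using img[OF inS, of 0 3 2 0 True] img[OF inS, of 0 1 2 0 True] img[OF inS, of 0 2 3 2 True] img[OF inS, of 0 2 1 2 True]
      by (cases y; cases x) (simp_all add: phi_CA1 phi_CA2 phi_CA3 phi_CA4)
  qed (simp add: CA_False idH)
  have CBH: "CB b y \<in> ?H" for b y
  proof (cases b)
    case True
    then show ?thesis
      using img[OF inS, of 0 0 0 0 True] img[OF inS, of 0 0 0 2 True]
      by (cases y) (simp_all add: phi_CB1 phi_CB2)
  qed (simp add: CB_False idH)
  have CGH: "CG b \<in> ?H" for b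
  proof (cases b)
    case True
    then show ?thesis using img[OF inS, of 0 0 0 3 True] by (simp add: phi_CG)
  qed (simp add: CG_False idH)
  show "carrier W3 \<subseteq> ?H"
  proof
    fix p assume "p \<in> carrier W3"
    then obtain \<alpha> \<beta> \<gamma> where p: "p = wr \<alpha> \<beta> \<gamma>" by (auto simp: carrier_W3 WRset_def)
    show "p \<in> ?H" unfolding p wr_decomp
      by (intro cl CAH CBH CGH)
  qed
qed

lemma card_S: "card (carrier S_grp) = 512"
proof -
  have "card R3 = 64" unfolding R3_def by (simp add: card_cartesian_product)
  moreover have "card D8c = 8" unfolding D8c_def by (simp add: card_cartesian_product)
  ultimately show ?thesis by (simp add: carrier_S card_cartesian_product)
qed

lemma finite_S: "finite (carrier S_grp)"
  unfolding carrier_S R3_def D8c_def by simp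

lemma gen_prod: "gen_v1 \<otimes>\<^bsub>S_grp\<^esub> gen_v3 = ((1,0,1),(0,False))"
  by (simp add: gen_v1_def gen_v3_def mult_S vadd_def vmod_def d8_act_def d8_mult_def)

theorem lemma2p1:
  shows "card (generate S_grp {gen_v1 \<otimes>\<^bsub>S_grp\<^esub> gen_v3}) = 4
       \<and> generate S_grp {gen_v1 \<otimes>\<^bsub>S_grp\<^esub> gen_v3} \<lhd> S_grp
       \<and> S_grp Mod (generate S_grp {gen_v1 \<otimes>\<^bsub>S_grp\<^esub> gen_v3}) \<cong> W3"
proof -
  interpret GH: group_hom S_grp W3 phi by (rule phi_hom)
  let ?K = "kernel S_grp W3 phi"
  let ?x = "((1::int,0::int,1::int),(0::int,False))"
  have iso: "S_grp Mod ?K \<cong> W3" by (rule GH.FactGroup_iso[OF phi_surj])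
  have "card (rcosets\<^bsub>S_grp\<^esub> ?K) = 128"
    using iso_same_card[OF iso] card_W3 by (simp add: FactGroup_def)
  moreover have "card (rcosets\<^bsub>S_grp\<^esub> ?K) * card ?K = 512"
    using group.lagrange[OF group_S GH.subgroup_kernel] card_S by (simp add: order_def)
  ultimately have cK: "card ?K = 4" by simp
  define K0 :: "S_elem set" where "K0 = {((0,0,0),(0,False)), ?x, ((2,0,2),(0,False)), ((3,0,3),(0,False))}"
  have cK0: "card K0 = 4" unfolding K0_def by simp
  have xS: "?x \<in> carrier S_grp" by (simp add: carrier_S R3_def D8c_def)
  have x2: "?x \<otimes>\<^bsub>S_grp\<^esub> ?x = ((2,0,2),(0,False))"
    by (simp add: mult_S vadd_def vmod_def d8_act_def d8_mult_def)
  have x3: "((2,0,2),(0,False)) \<otimes>\<^bsub>S_grp\<^esub> ?x = ((3,0,3),(0,False))"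
    by (simp add: mult_S vadd_def vmod_def d8_act_def d8_mult_def)
  have K0gen: "K0 \<subseteq> generate S_grp {?x}"
  proof -
    have g1: "?x \<in> generate S_grp {?x}" by (rule generate.incl) simp
    have g0: "((0,0,0),(0,False)) \<in> generate S_grp {?x}" using generate.one[of S_grp "{?x}"] by (simp add: one_S)
    have g2: "((2,0,2),(0,False)) \<in> generate S_grp {?x}" using generate.eng[OF g1 g1] x2 by simp
    have g3: "((3,0,3),(0,False)) \<in> generate S_grp {?x}" using generate.eng[OF g2 g1] x3 by simp
    show ?thesis unfolding K0_def using g0 g1 g2 g3 by blast
  qed
  have xK: "?x \<in> ?K"
  proof -
    have "phi ?x = id" by (simp add: phi_def Pv_def Qg_def Vpow_def wrc)
    then show ?thesis unfolding kernel_def using xS by (simp add: one_W3)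
  qed
  have genK: "generate S_grp {?x} \<subseteq> ?K"
    by (rule group.generate_subgroup_incl[OF group_S _ GH.subgroup_kernel]) (simp add: xK)
  have finK: "finite ?K" using finite_S unfolding kernel_def by simp
  have "K0 = ?K"
    by (rule card_subset_eq[OF finK]) (use K0gen genK in blast, simp add: cK cK0)
  then have gen_eq: "generate S_grp {?x} = ?K" using K0gen genK by blast
  have c4: "card (generate S_grp {?x}) = 4" using gen_eq cK by simp
  have nK: "generate S_grp {?x} \<lhd> S_grp" using GH.normal_kernel gen_eq by simp
  have iK: "S_grp Mod (generate S_grp {?x}) \<cong> W3" using iso gen_eq by simp
  show ?thesis unfolding gen_prod using c4 nK iK by blast
qed

end
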